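(* Let $(\mathbb{R}^n,S)$ and $(\mathbb{R}^n,T)$ be indecomposable topological Alexander quandles ($S,T$ continuous additive automorphisms). If $F:\mathbb{R}^n\to\mathbb{R}^n$ is a continuous quandle isomorphism with $F(0)=0$, then $S$, $T$, $F$ are linear and $T=FSF^{-1}$.
   Context: The topological Alexander quandle $(\mathbb{R}^n,S)$ has operation $x*y=Sx+(I-S)y$; it is indecomposable (the group generated by right multiplications acts transitively) iff $I-S$ is invertible. *)

theory Defs
  imports "HOL-Analysis.Analysis"
begin

definition alex_op :: "('a::real_vector \<Rightarrow> 'a) \<Rightarrow> 'a \<Rightarrow> 'a \<Rightarrow> 'a" where
  "alex_op S x y = S x + (y - S y)"

definition cont_add_aut :: "('a::real_normed_vector \<Rightarrow> 'a) \<Rightarrow> bool" where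
  "cont_add_aut S \<longleftrightarrow> (\<forall>x y. S (x + y) = S x + S y) \<and> bij S \<and> continuous_on UNIV S"

text \<open>A quandle (X, op) with all right multiplications bijective is indecomposable iff the
  group generated by the right multiplications R_y = (\<lambda>x. op x y) acts transitively, i.e.
  any two elements are connected by a finite chain of steps x \<mapsto> op x y and their inverses.\<close>
definition indecomposable :: "('a \<Rightarrow> 'a \<Rightarrow> 'a) \<Rightarrow> bool" where
  "indecomposable op \<longleftrightarrow>
     (let R = {(x, op x y) | x y. True} in \<forall>a b. (a, b) \<in> (R \<union> R\<inverse>)\<^sup>*)"

definition quandle_iso :: "('a \<Rightarrow> 'a \<Rightarrow> 'a) \<Rightarrow> ('b \<Rightarrow> 'b \<Rightarrow> 'b) \<Rightarrow> ('a \<Rightarrow> 'b) \<Rightarrow> bool" where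
  "quandle_iso op1 op2 F \<longleftrightarrow> bij F \<and> (\<forall>x y. F (op1 x y) = op2 (F x) (F y))"

end

theory Submission
  imports Defs
begin

lemma add_cont_linear:
  fixes f :: "'a::real_normed_vector \<Rightarrow> 'b::real_normed_vector"
  assumes add: "\<And>x y. f (x + y) = f x + f y" and cont: "continuous_on UNIV f"
  shows "linear f"
proof -
  have f0: "f 0 = 0" using add[of 0 0] by simp
  have fneg: "f (- x) = - f x" for x proof -
    have "f x + f (- x) = 0" using add[of x "-x"] f0 by simp
    then show ?thesis by (metis neg_eq_iff_add_eq_0)
  qed
  have fnat: "f (of_nat n *\<^sub>R x) = of_nat n *\<^sub>R f x" for n x
    by (induction n) (simp_all add: f0 add algebra_simps)
  have fint: "f (of_int k *\<^sub>R x) = of_int k *\<^sub>R f x" for k x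
  proof (cases "k \<ge> 0")
    case True then show ?thesis using fnat[of "nat k" x] by simp
  next
    case False
    then have k: "real_of_int k = - real (nat (-k))" by simp
    have "f (of_int k *\<^sub>R x) = f (- (real (nat (-k)) *\<^sub>R x))" by (simp only: k scaleR_minus_left)
    also have "\<dots> = - (real (nat (-k)) *\<^sub>R f x)" by (simp only: fneg fnat)
    also have "\<dots> = of_int k *\<^sub>R f x" by (simp only: k scaleR_minus_left)
    finally show ?thesis .
  qed
  have frat: "f (r *\<^sub>R x) = r *\<^sub>R f x" if rQ: "r \<in> \<rat>" for r x
  proof -
    obtain a b where b: "b > 0" and r: "r = of_int a / of_int b"
      using Rats_cases'[OF rQ] by blast
    have "of_int b *\<^sub>R f (r *\<^sub>R x) = f (of_int b *\<^sub>R (r *\<^sub>R x))" by (simp only: fint)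
    also have "of_int b *\<^sub>R (r *\<^sub>R x) = of_int a *\<^sub>R x" using b r by simp
    also have "f \<dots> = of_int a *\<^sub>R f x" by (simp only: fint)
    also have "\<dots> = of_int b *\<^sub>R (r *\<^sub>R f x)" using b r by simp
    finally have "of_int b *\<^sub>R f (r *\<^sub>R x) = of_int b *\<^sub>R (r *\<^sub>R f x)" .
    then show ?thesis using b unfolding scaleR_cancel_left by simp
  qed
  have fscale: "f (c *\<^sub>R x) = c *\<^sub>R f x" for c x
  proof -
    have cl: "closed {c. f (c *\<^sub>R x) = c *\<^sub>R f x}"
      by (rule closed_Collect_eq) (auto intro!: continuous_intros continuous_on_compose2[OF cont])
    have "\<rat> \<subseteq> {c. f (c *\<^sub>R x) = c *\<^sub>R f x}" using frat by auto
    then have "closure \<rat> \<subseteq> {c. f (c *\<^sub>R x) = c *\<^sub>R f x}"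
      using cl closure_minimal by blast
    then show ?thesis using Rats_closure_real by auto
  qed
  show ?thesis by (rule linearI) (simp_all add: add fscale)
qed

theorem mainTheorem15:
  fixes S T F :: "real ^ 'n \<Rightarrow> real ^ 'n"
  assumes "cont_add_aut S" and "cont_add_aut T"
    and "indecomposable (alex_op S)" and "indecomposable (alex_op T)"
    and "continuous_on UNIV F" and "quandle_iso (alex_op S) (alex_op T) F"
    and "F 0 = 0"
  shows "linear S \<and> linear T \<and> linear F \<and> T = F \<circ> S \<circ> inv F"
proof -
  have Sadd: "\<And>x y. S (x + y) = S x + S y" and Sbij: "bij S" and Scont: "continuous_on UNIV S"
    using assms(1) unfolding cont_add_aut_def by auto
  have Tadd: "\<And>x y. T (x + y) = T x + T y" and Tcont: "continuous_on UNIV T"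
    using assms(2) unfolding cont_add_aut_def by auto
  have Fbij: "bij F" and Fop: "\<And>x y. F (alex_op S x y) = alex_op T (F x) (F y)"
    using assms(6) unfolding quandle_iso_def by auto
  have S0: "S 0 = 0" using Sadd[of 0 0] by simp
  have T0: "T 0 = 0" using Tadd[of 0 0] by simp
  have Sdiff: "S (x - y) = S x - S y" for x y
    using Sadd[of "x - y" y] by (simp add: algebra_simps)
  define R where "R = {(x, alex_op S x y) | x y :: real ^ 'n. True}"
  define M where "M = range (\<lambda>z. z - S z)"
  have Mclosed: "u \<in> M \<Longrightarrow> v \<in> M \<Longrightarrow> u + v \<in> M" for u v
  proof -
    assume "u \<in> M" "v \<in> M"
    then obtain a b where "u = a - S a" "v = b - S b" unfolding M_def by auto
    then have "u + v = (a + b) - S (a + b)" by (simp add: Sadd algebra_simps)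
    then show ?thesis unfolding M_def by auto
  qed
  have Mneg: "u \<in> M \<Longrightarrow> - u \<in> M" for u
  proof -
    assume "u \<in> M"
    then obtain a where "u = a - S a" unfolding M_def by auto
    then have "- u = (- a) - S (- a)" using Sdiff[of 0 a] S0 by (simp add: algebra_simps)
    then show ?thesis unfolding M_def by auto
  qed
  have step1: "(a, b) \<in> R \<union> R\<inverse> \<Longrightarrow> a - b \<in> M" for a b
  proof -
    have "x - alex_op S x y \<in> M" for x y
    proof -
      have "x - alex_op S x y = (x - y) - S (x - y)"
        unfolding alex_op_def by (simp add: Sdiff algebra_simps)
      then show ?thesis unfolding M_def by (metis rangeI)
    qed
    note xm = this
    assume "(a, b) \<in> R \<union> R\<inverse>"
    then show ?thesis
    proof
      assume "(a, b) \<in> R"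
      then obtain y where "b = alex_op S a y" unfolding R_def by blast
      then show ?thesis using xm by simp
    next
      assume "(a, b) \<in> R\<inverse>"
      then obtain y where "a = alex_op S b y" unfolding R_def by blast
      then have "b - a \<in> M" using xm by simp
      then have "- (b - a) \<in> M" by (rule Mneg)
      then show ?thesis by simp
    qed
  qed
  have chain: "(a, b) \<in> (R \<union> R\<inverse>)\<^sup>* \<Longrightarrow> a - b \<in> M" for a b
  proof (induction rule: rtrancl_induct)
    case base
    show ?case unfolding M_def using rangeI[of "\<lambda>z. z - S z" 0] S0 by simp
  next
    case (step y z)
    have "a - z = (a - y) + (y - z)" by simp
    moreover have "y - z \<in> M" using step.hyps(2) by (rule step1)
    ultimately show ?case using Mclosed[OF step.IH] by metis
  qed
  have surjIS: "\<exists>y. v = y - S y" for v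
  proof -
    have "(v, 0) \<in> (R \<union> R\<inverse>)\<^sup>*" using assms(3) unfolding indecomposable_def R_def Let_def by blast
    then have "v - 0 \<in> M" by (rule chain)
    then show ?thesis unfolding M_def by auto
  qed
  have FS: "F (S x) = T (F x)" for x
    using Fop[of x 0] assms(7) T0 S0 unfolding alex_op_def by simp
  have FIS: "F (y - S y) = F y - T (F y)" for y
    using Fop[of 0 y] assms(7) T0 S0 unfolding alex_op_def by simp
  have Fadd: "F (u + v) = F u + F v" for u v
  proof -
    obtain x where x: "u = S x" using Sbij by (metis bij_pointE)
    obtain y where y: "v = y - S y" using surjIS by blast
    have "F (u + v) = F (alex_op S x y)" unfolding alex_op_def x y by simp
    also have "\<dots> = T (F x) + (F y - T (F y))" using Fop unfolding alex_op_def by simp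
    finally show ?thesis using FS FIS x y by simp
  qed
  have linF: "linear F" by (rule add_cont_linear[OF Fadd assms(5)])
  have "T = F \<circ> S \<circ> inv F"
  proof
    fix z
    have "F (inv F z) = z" using Fbij by (simp add: bij_is_surj surj_f_inv_f)
    then show "T z = (F \<circ> S \<circ> inv F) z" using FS[of "inv F z"] by simp
  qed
  then show ?thesis using add_cont_linear[OF Sadd Scont] add_cont_linear[OF Tadd Tcont] linF by blast
qed

end
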